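(* Let $\sigma:\mathbb{R}\to\mathbb{R}$ be a differentiable activation function for which there is a constant $c_\sigma>0$ such that for any $L'$-Lipschitz $h:\mathbb{R}\to\mathbb{R}$ that is constant outside $[-R,R]$ and any $\delta>0$, there exist reals $a,(\alpha_i,\beta_i,\gamma_i)_{i=1}^m$ with $m\le c_\sigma RL'/\delta$ and $\sup_{x\in\mathbb{R}}|a+\sum_{i=1}^m\alpha_i\sigma(\beta_ix+\gamma_i)-h(x)|\le\delta$. Then: 1. For any $M>0$ and $\delta>0$ there exists a 2-layer neural net $g:\mathbb{R}^2\to\mathbb{R}$ of size $m\le 8c_\sigma M^2/\delta+1$ such that $\sup_{x,y\in[-M,M]}|g(x,y)-xy|\le\delta$. 2. For any $0<a\le b<\infty$ and $\delta>0$ there exists a 2-layer neural net $q:\mathbb{R}\to\mathbb{R}$ of size $m\le c_\sigma\frac{b}{a^2\delta}+1$ such that $\sup_{x\in[a,b]}|q(x)-1/x|\le\delta$.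
   Context: A 2-layer neural net with activation $\sigma$ of size $m+1$ is a function of the form $x\mapsto a+\sum_{i=1}^m\alpha_i\sigma(w_i^\top x+\gamma_i)$ (the constant $a$ counting as one node). *)

theory Defs
  imports "HOL-Analysis.Analysis"
begin

text \<open>A 2-layer neural net with activation sigma of size s (s = m+1, the constant
  counting as one node): x maps to a + sum_{i<m} alpha_i * sigma(w_i . x + gamma_i).\<close>
definition two_layer_net :: "(real \<Rightarrow> real) \<Rightarrow> nat \<Rightarrow> ('a::euclidean_space \<Rightarrow> real) \<Rightarrow> bool" where
  "two_layer_net \<sigma> s g \<longleftrightarrow> s \<ge> 1 \<and>
     (\<exists>a (\<alpha>::nat \<Rightarrow> real) (w::nat \<Rightarrow> 'a) (\<gamma>::nat \<Rightarrow> real).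
        \<forall>x. g x = a + (\<Sum>i<s - 1. \<alpha> i * \<sigma> (w i \<bullet> x + \<gamma> i)))"

definition const_outside :: "real \<Rightarrow> (real \<Rightarrow> real) \<Rightarrow> bool" where
  "const_outside R h \<longleftrightarrow> (\<exists>c1 c2. \<forall>x. (x \<le> -R \<longrightarrow> h x = c1) \<and> (x \<ge> R \<longrightarrow> h x = c2))"

end

theory Submission
  imports Defs
begin

lemma sum_split_add: "(\<Sum>i<m+n. f i) = (\<Sum>i<m. f i) + (\<Sum>i<n. f (m+i)) " for f :: "nat \<Rightarrow> real"
  by (induction n) auto

lemma lip_sq:
  assumes "M > 0"
  shows "M-lipschitz_on UNIV (\<lambda>t::real. (max (-2*M) (min t (2*M)))\<^sup>2 / 4)"
proof (rule lipschitz_onI)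
  fix u v :: real
  define cu where "cu = max (-2*M) (min u (2*M))"
  define cv where "cv = max (-2*M) (min v (2*M))"
  have d: "\<bar>cu - cv\<bar> \<le> \<bar>u - v\<bar>" unfolding cu_def cv_def by linarith
  have s: "\<bar>cu + cv\<bar> \<le> 4*M" unfolding cu_def cv_def using assms by linarith
  have e: "cu\<^sup>2/4 - cv\<^sup>2/4 = (cu - cv) * (cu + cv) / 4"
    by (simp add: power2_eq_square algebra_simps)
  have "\<bar>cu\<^sup>2/4 - cv\<^sup>2/4\<bar> = \<bar>cu - cv\<bar> * \<bar>cu + cv\<bar> / 4"
    unfolding e by (simp add: abs_mult)
  also have "\<dots> \<le> \<bar>u - v\<bar> * (4*M) / 4"
    using d s by (intro divide_right_mono mult_mono) auto
  finally show "dist (cu\<^sup>2/4) (cv\<^sup>2/4) \<le> M * dist u v"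
    by (simp add: dist_real_def mult.commute)
qed (use assms in auto)

lemma lip_inv:
  assumes "a > 0" "a \<le> b"
  shows "(1/a\<^sup>2)-lipschitz_on UNIV (\<lambda>t::real. 1 / max a (min t b))"
proof (rule lipschitz_onI)
  fix u v :: real
  define cu where "cu = max a (min u b)"
  define cv where "cv = max a (min v b)"
  have d: "\<bar>cu - cv\<bar> \<le> \<bar>u - v\<bar>" unfolding cu_def cv_def by linarith
  have pu: "cu \<ge> a" and pv: "cv \<ge> a" unfolding cu_def cv_def by auto
  have "a*a \<le> cu*cv" using pu pv assms by (intro mult_mono) auto
  hence aa: "a\<^sup>2 \<le> cu*cv" by (simp add: power2_eq_square)
  have "\<bar>1/cu - 1/cv\<bar> = \<bar>cu - cv\<bar> / (cu*cv)"
    using pu pv assms by (simp add: field_simps abs_div)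
  also have "\<dots> \<le> \<bar>u - v\<bar> / a\<^sup>2"
    using d aa assms by (intro frac_le) auto
  finally show "dist (1/cu) (1/cv) \<le> 1/a\<^sup>2 * dist u v"
    by (simp add: dist_real_def)
qed (use assms in auto)

lemma co_sq: "R \<ge> 0 \<Longrightarrow> const_outside R (\<lambda>t::real. (max (-R) (min t R))\<^sup>2 / 4)"
  unfolding const_outside_def by (rule exI[of _ "R\<^sup>2/4"], rule exI[of _ "R\<^sup>2/4"]) (auto simp: max_def min_def)

lemma co_inv: "a > 0 \<Longrightarrow> a \<le> b \<Longrightarrow> const_outside b (\<lambda>t::real. 1 / max a (min t b))"
  unfolding const_outside_def
  by (rule exI[of _ "1/a"], rule exI[of _ "1/b"]) auto

theorem lemma8:
  fixes \<sigma> :: "real \<Rightarrow> real" and c\<sigma> :: real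
  assumes diff: "\<forall>x. \<sigma> differentiable (at x)"
    and cpos: "c\<sigma> > 0"
    and approx: "\<forall>R L h \<delta>. R > 0 \<longrightarrow> L > 0 \<longrightarrow> L-lipschitz_on UNIV h \<longrightarrow> const_outside R h \<longrightarrow> \<delta> > 0 \<longrightarrow>
        (\<exists>m::nat. \<exists>a (\<alpha>::nat \<Rightarrow> real) (\<beta>::nat \<Rightarrow> real) (\<gamma>::nat \<Rightarrow> real).
           real m \<le> c\<sigma> * R * L / \<delta> \<and>
           (\<forall>x. \<bar>a + (\<Sum>i<m. \<alpha> i * \<sigma> (\<beta> i * x + \<gamma> i)) - h x\<bar> \<le> \<delta>))"
  shows "(\<forall>M \<delta>. M > 0 \<longrightarrow> \<delta> > 0 \<longrightarrow>
            (\<exists>(g :: real \<times> real \<Rightarrow> real) s. two_layer_net \<sigma> s g \<and>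
               real s \<le> 8 * c\<sigma> * M\<^sup>2 / \<delta> + 1 \<and>
               (\<forall>x y. x \<in> {-M..M} \<longrightarrow> y \<in> {-M..M} \<longrightarrow> \<bar>g (x, y) - x * y\<bar> \<le> \<delta>)))
       \<and> (\<forall>a b \<delta>. 0 < a \<longrightarrow> a \<le> b \<longrightarrow> \<delta> > 0 \<longrightarrow>
            (\<exists>(q :: real \<Rightarrow> real) s. two_layer_net \<sigma> s q \<and>
               real s \<le> c\<sigma> * b / (a\<^sup>2 * \<delta>) + 1 \<and>
               (\<forall>x\<in>{a..b}. \<bar>q x - 1 / x\<bar> \<le> \<delta>)))"
proof (intro conjI allI impI)
  fix M \<delta> :: real
  assume M: "M > 0" and d: "\<delta> > 0"
  define h where "h = (\<lambda>t::real. (max (-(2*M)) (min t (2*M)))\<^sup>2 / 4)"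
  have lip: "M-lipschitz_on UNIV h" unfolding h_def using lip_sq[OF M] by simp
  have co: "const_outside (2*M) h" unfolding h_def by (rule co_sq) (use M in simp)
  have "\<exists>m::nat. \<exists>a (\<alpha>::nat \<Rightarrow> real) (\<beta>::nat \<Rightarrow> real) (\<gamma>::nat \<Rightarrow> real).
           real m \<le> c\<sigma> * (2*M) * M / (\<delta>/2) \<and>
           (\<forall>x. \<bar>a + (\<Sum>i<m. \<alpha> i * \<sigma> (\<beta> i * x + \<gamma> i)) - h x\<bar> \<le> \<delta>/2)"
    by (rule approx[rule_format]) (use M d lip co in auto)
  then obtain m a \<alpha> \<beta> \<gamma> where mb: "real m \<le> c\<sigma> * (2*M) * M / (\<delta>/2)"
    and ap: "\<And>x. \<bar>a + (\<Sum>i<m. \<alpha> i * \<sigma> (\<beta> i * x + \<gamma> i)) - h x\<bar> \<le> \<delta>/2"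
    by blast
  define N where "N = (\<lambda>x. a + (\<Sum>i<m. \<alpha> i * \<sigma> (\<beta> i * x + \<gamma> i)))"
  define g where "g = (\<lambda>p::real\<times>real. N (fst p + snd p) - N (fst p - snd p))"
  define \<alpha>' where "\<alpha>' = (\<lambda>i. if i < m then \<alpha> i else - \<alpha> (i - m))"
  define w where "w = (\<lambda>i. if i < m then (\<beta> i, \<beta> i) else (\<beta> (i-m), - \<beta> (i-m)))"
  define \<gamma>' where "\<gamma>' = (\<lambda>i. if i < m then \<gamma> i else \<gamma> (i - m))"
  have "two_layer_net \<sigma> (2*m+1) g"
    unfolding two_layer_net_def
  proof (intro conjI exI allI)
    fix p :: "real \<times> real"
    obtain x y where p: "p = (x,y)" by force
    have "(\<Sum>i<m+m. \<alpha>' i * \<sigma> (w i \<bullet> p + \<gamma>' i)) =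
      (\<Sum>i<m. \<alpha> i * \<sigma> (\<beta> i * (x+y) + \<gamma> i)) - (\<Sum>i<m. \<alpha> i * \<sigma> (\<beta> i * (x-y) + \<gamma> i))"
      unfolding sum_split_add \<alpha>'_def w_def \<gamma>'_def p
      by (simp add: algebra_simps sum_negf)
    then show "g p = 0 + (\<Sum>i<2*m+1-1. \<alpha>' i * \<sigma> (w i \<bullet> p + \<gamma>' i))"
      unfolding g_def N_def p by (simp add: mult_2)
  qed simp
  moreover have "real (2*m+1) \<le> 8 * c\<sigma> * M\<^sup>2 / \<delta> + 1"
  proof -
    have "c\<sigma> * (2*M) * M / (\<delta>/2) = 4 * c\<sigma> * M\<^sup>2 / \<delta>" by (simp add: power2_eq_square field_simps)
    with mb have "real m \<le> 4 * c\<sigma> * M\<^sup>2 / \<delta>" by linarith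
    hence "2 * real m \<le> 2 * (4 * c\<sigma> * M\<^sup>2 / \<delta>)" by simp
    also have "\<dots> = 8 * c\<sigma> * M\<^sup>2 / \<delta>" by simp
    finally show ?thesis by simp
  qed
  moreover have "\<bar>g (x, y) - x * y\<bar> \<le> \<delta>" if "x \<in> {-M..M}" "y \<in> {-M..M}" for x y
  proof -
    have h1: "h (x+y) = (x+y)\<^sup>2/4" unfolding h_def using that by (simp add: max_def min_def)
    have h2: "h (x-y) = (x-y)\<^sup>2/4" unfolding h_def using that by (simp add: max_def min_def)
    have xy: "x*y = h (x+y) - h (x-y)" unfolding h1 h2 by (simp add: power2_eq_square field_simps)
    have "\<bar>N (x+y) - h (x+y)\<bar> \<le> \<delta>/2" "\<bar>N (x-y) - h (x-y)\<bar> \<le> \<delta>/2"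
      using ap unfolding N_def by auto
    then show ?thesis unfolding g_def xy by (simp add: abs_le_iff; linarith)
  qed
  ultimately show "\<exists>(g :: real \<times> real \<Rightarrow> real) s. two_layer_net \<sigma> s g \<and>
               real s \<le> 8 * c\<sigma> * M\<^sup>2 / \<delta> + 1 \<and>
               (\<forall>x y. x \<in> {-M..M} \<longrightarrow> y \<in> {-M..M} \<longrightarrow> \<bar>g (x, y) - x * y\<bar> \<le> \<delta>)"
    by blast
next
  fix a b \<delta> :: real
  assume a: "0 < a" and ab: "a \<le> b" and d: "\<delta> > 0"
  define h where "h = (\<lambda>t::real. 1 / max a (min t b))"
  have "(1/a\<^sup>2)-lipschitz_on UNIV h" unfolding h_def using lip_inv[OF a ab] by simp
  moreover have "const_outside b h" unfolding h_def by (rule co_inv[OF a ab])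
  moreover have "b > 0" "1/a\<^sup>2 > 0" using a ab by auto
  ultimately have "\<exists>m::nat. \<exists>a0 (\<alpha>::nat \<Rightarrow> real) (\<beta>::nat \<Rightarrow> real) (\<gamma>::nat \<Rightarrow> real).
           real m \<le> c\<sigma> * b * (1/a\<^sup>2) / \<delta> \<and>
           (\<forall>x. \<bar>a0 + (\<Sum>i<m. \<alpha> i * \<sigma> (\<beta> i * x + \<gamma> i)) - h x\<bar> \<le> \<delta>)"
    using d by (intro approx[rule_format]) auto
  then obtain m a0 \<alpha> \<beta> \<gamma> where mb: "real m \<le> c\<sigma> * b * (1/a\<^sup>2) / \<delta>"
    and ap: "\<And>x. \<bar>a0 + (\<Sum>i<m. \<alpha> i * \<sigma> (\<beta> i * x + \<gamma> i)) - h x\<bar> \<le> \<delta>"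
    by blast
  define q where "q = (\<lambda>x. a0 + (\<Sum>i<m. \<alpha> i * \<sigma> (\<beta> i * x + \<gamma> i)))"
  have "two_layer_net \<sigma> (m+1) q"
    unfolding two_layer_net_def
    by (intro conjI exI[of _ a0] exI[of _ \<alpha>] exI[of _ \<beta>] exI[of _ \<gamma>] allI) (auto simp: q_def)
  moreover have "real (m+1) \<le> c\<sigma> * b / (a\<^sup>2 * \<delta>) + 1" using mb by simp
  moreover have "\<forall>x\<in>{a..b}. \<bar>q x - 1 / x\<bar> \<le> \<delta>"
  proof
    fix x assume x: "x \<in> {a..b}"
    have "h x = 1/x" unfolding h_def using x by (simp add: max_def min_def)
    then show "\<bar>q x - 1 / x\<bar> \<le> \<delta>" using ap[of x] unfolding q_def by simp
  qed
  ultimately show "\<exists>(q :: real \<Rightarrow> real) s. two_layer_net \<sigma> s q \<and>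
               real s \<le> c\<sigma> * b / (a\<^sup>2 * \<delta>) + 1 \<and>
               (\<forall>x\<in>{a..b}. \<bar>q x - 1 / x\<bar> \<le> \<delta>)" by blast
qed

end
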